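(* Let $\{1/N,\rho_x\}_{x=1}^N$ be an ensemble of density operators on a finite-dimensional Hilbert space given with equal prior probabilities $1/N$, and let $K$, $\{r_x,\sigma_x\}$, $\{M_x\}$ be a symmetry operator, complementary states and POVM, i.e. $K$ Hermitian, $r_x\ge 0$, $\sigma_x$ density operators, $\{M_x\}$ a POVM, with $K=\frac1N\rho_x+r_x\sigma_x$ and $r_x\mathrm{tr}[M_x\sigma_x]=0$ for all $x$. Then all $r_x$ are equal to a common value $r$, and $$P_{\mathrm{guess}}=\frac1N+r,$$ where $r=\dfrac{\|\frac1N\rho_x-\frac1N\rho_y\|_1}{\|\sigma_x-\sigma_y\|_1}$ for any $x,y$ with $\sigma_x\ne\sigma_y$.
   Context: $P_{\mathrm{guess}}=\max_{\{M_x\}}\sum_x \frac1N\mathrm{tr}[M_x\rho_x]$ over POVMs (positive semidefinite operators summing to the identity). $\|\cdot\|_1$ is the trace norm. *)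

theory Defs
  imports "Jordan_Normal_Form.Matrix" Complex_Main
begin

text \<open>Operators on the Hilbert space C^d are d x d complex matrices.\<close>

definition mtrace :: "complex mat \<Rightarrow> complex" where
  "mtrace A = (\<Sum>i<dim_row A. A $$ (i,i))"

definition adj :: "complex mat \<Rightarrow> complex mat" where
  "adj A = mat (dim_col A) (dim_row A) (\<lambda>(i,j). cnj (A $$ (j,i)))"

definition hermitian :: "nat \<Rightarrow> complex mat \<Rightarrow> bool" where
  "hermitian d A \<longleftrightarrow> A \<in> carrier_mat d d \<and> adj A = A"

definition psd :: "nat \<Rightarrow> complex mat \<Rightarrow> bool" where
  "psd d A \<longleftrightarrow> hermitian d A \<and>
     (\<forall>v \<in> carrier_vec d. Re ((A *\<^sub>v v) \<bullet>c v) \<ge> 0)"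

definition density :: "nat \<Rightarrow> complex mat \<Rightarrow> bool" where
  "density d \<rho> \<longleftrightarrow> psd d \<rho> \<and> mtrace \<rho> = 1"

definition msum :: "nat \<Rightarrow> ('i \<Rightarrow> complex mat) \<Rightarrow> 'i set \<Rightarrow> complex mat" where
  "msum d A S = mat d d (\<lambda>ij. \<Sum>x\<in>S. A x $$ ij)"

definition povm :: "nat \<Rightarrow> nat \<Rightarrow> (nat \<Rightarrow> complex mat) \<Rightarrow> bool" where
  "povm d N M \<longleftrightarrow> (\<forall>x<N. psd d (M x)) \<and> msum d M {..<N} = 1\<^sub>m d"

definition msqrt :: "nat \<Rightarrow> complex mat \<Rightarrow> complex mat" where
  "msqrt d A = (THE B. psd d B \<and> B * B = A)"

definition trace_norm :: "nat \<Rightarrow> complex mat \<Rightarrow> real" where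
  "trace_norm d A = Re (mtrace (msqrt d (adj A * A)))"

definition P_guess :: "nat \<Rightarrow> nat \<Rightarrow> (nat \<Rightarrow> complex mat) \<Rightarrow> real" where
  "P_guess d N \<rho> = Sup {(\<Sum>x<N. Re (mtrace (M x * \<rho> x)) / real N) | M. povm d N M}"

end

theory Submission
  imports Defs "Jordan_Normal_Form.Schur_Decomposition"
begin

lemma adj_index: "i < dim_col A \<Longrightarrow> j < dim_row A \<Longrightarrow> adj A $$ (i,j) = cnj (A $$ (j,i))"
  unfolding adj_def by simp
lemma adj_dim[simp]: "dim_row (adj A) = dim_col A" "dim_col (adj A) = dim_row A"
  unfolding adj_def by simp_all
lemma t2: "A \<in> carrier_mat d d \<Longrightarrow> a < d \<Longrightarrow> b < d \<Longrightarrow> adj A $$ (b,a) = cnj (A $$ (a,b))"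
  by (rule adj_index) auto

lemma hermitian_iff: "hermitian d A \<longleftrightarrow> A \<in> carrier_mat d d \<and> (\<forall>a<d. \<forall>b<d. A $$ (b,a) = cnj (A $$ (a,b)))"
proof
  assume h: "hermitian d A"
  hence A: "A \<in> carrier_mat d d" and e: "adj A = A" unfolding hermitian_def by auto
  have "\<forall>a<d. \<forall>b<d. A $$ (b,a) = cnj (A $$ (a,b))"
  proof (intro allI impI)
    fix a b assume ab: "a < d" "b < d"
    have "adj A $$ (b,a) = cnj (A $$ (a,b))" by (rule t2[OF A ab])
    thus "A $$ (b,a) = cnj (A $$ (a,b))" unfolding e .
  qed
  thus "A \<in> carrier_mat d d \<and> (\<forall>a<d. \<forall>b<d. A $$ (b,a) = cnj (A $$ (a,b)))" using A by blast
next
  assume h: "A \<in> carrier_mat d d \<and> (\<forall>a<d. \<forall>b<d. A $$ (b,a) = cnj (A $$ (a,b)))"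
  hence A: "A \<in> carrier_mat d d" by blast
  have "adj A = A"
  proof (rule eq_matI)
    fix i j assume ij: "i < dim_row A" "j < dim_col A"
    hence "i < d" "j < d" using A by auto
    thus "adj A $$ (i,j) = A $$ (i,j)" using h t2[OF A] by metis
  qed (use A in auto)
  thus "hermitian d A" using A unfolding hermitian_def by blast
qed

definition qf :: "nat \<Rightarrow> (nat \<Rightarrow> nat \<Rightarrow> complex) \<Rightarrow> (nat \<Rightarrow> complex) \<Rightarrow> complex" where
  "qf d A f = (\<Sum>a<d. \<Sum>b<d. cnj (f a) * A a b * f b)"

definition ent :: "complex mat \<Rightarrow> nat \<Rightarrow> nat \<Rightarrow> complex" where
  "ent M a b = M $$ (a,b)"

lemma cform_eq:
  assumes A: "A \<in> carrier_mat d d" and v: "v \<in> carrier_vec d"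
  shows "(A *\<^sub>v v) \<bullet>c v = qf d (ent A) (\<lambda>i. v $ i)"
proof -
  have "(A *\<^sub>v v) \<bullet>c v = (\<Sum>a<d. (\<Sum>b<d. A $$ (a,b) * v $ b) * cnj (v $ a))"
    using A v unfolding scalar_prod_def mult_mat_vec_def row_def
    by (simp add: lessThan_atLeast0)
  also have "\<dots> = qf d (ent A) (\<lambda>i. v $ i)"
    unfolding qf_def ent_def
    by (simp add: sum_distrib_right sum_distrib_left algebra_simps)
  finally show ?thesis .
qed

lemma psd_form:
  assumes "psd d A"
  shows "0 \<le> Re (qf d (ent A) f)"
proof -
  have A: "A \<in> carrier_mat d d" using assms unfolding psd_def hermitian_def by auto
  let ?v = "vec d f"
  have v: "?v \<in> carrier_vec d" by simp
  have "qf d (ent A) (\<lambda>i. ?v $ i) = qf d (ent A) f"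
    unfolding qf_def by simp
  hence "(A *\<^sub>v ?v) \<bullet>c ?v = qf d (ent A) f" using cform_eq[OF A v] by simp
  thus ?thesis using assms v unfolding psd_def by metis
qed

lemma psd_iff: "psd d A \<longleftrightarrow> hermitian d A \<and> (\<forall>f. 0 \<le> Re (qf d (ent A) f))"
proof
  assume "psd d A" thus "hermitian d A \<and> (\<forall>f. 0 \<le> Re (qf d (ent A) f))"
    using psd_form unfolding psd_def by auto
next
  assume h: "hermitian d A \<and> (\<forall>f. 0 \<le> Re (qf d (ent A) f))"
  hence A: "A \<in> carrier_mat d d" unfolding hermitian_def by auto
  have "\<forall>v \<in> carrier_vec d. Re ((A *\<^sub>v v) \<bullet>c v) \<ge> 0"
    using h cform_eq[OF A] by metis
  thus "psd d A" using h unfolding psd_def by auto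
qed

lemma qf_expand:
  fixes t :: real
  shows "qf d A (\<lambda>a. f a + of_real t * g a) = qf d A f
     + of_real t * (\<Sum>a<d. \<Sum>b<d. cnj (f a) * A a b * g b)
     + of_real t * (\<Sum>a<d. \<Sum>b<d. cnj (g a) * A a b * f b) + of_real (t*t) * qf d A g"
  unfolding qf_def
  by (simp add: algebra_simps sum.distrib sum_distrib_left)


lemma Q0:
  assumes herm: "\<forall>a<d. \<forall>b<d. A b a = cnj (A a b)"
    and pos: "\<forall>f. 0 \<le> Re (qf d A f)"
    and z: "Re (qf d A f) = 0"
  shows "\<forall>a<d. (\<Sum>b<d. A a b * f b) = 0"
proof -
  define g where "g a = (\<Sum>b<d. A a b * f b)" for a
  define X1 where "X1 = (\<Sum>a<d. \<Sum>b<d. cnj (f a) * A a b * g b)"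
  define X2 where "X2 = (\<Sum>a<d. \<Sum>b<d. cnj (g a) * A a b * f b)"
  have X2: "X2 = (\<Sum>a<d. cnj (g a) * g a)"
  proof -
    have dd: "(\<Sum>b<d. c * A a b * f b) = c * (\<Sum>b<d. A a b * f b)" for c a
      by (simp add: sum_distrib_left mult.assoc)
    have "(\<Sum>b<d. cnj (g a) * A a b * f b) = cnj (g a) * g a" for a
      using dd[of "cnj (g a)" a] g_def[of a] by simp
    thus ?thesis unfolding X2_def by simp
  qed
  have "cnj X2 = X1"
  proof -
    have "cnj X2 = (\<Sum>a<d. \<Sum>b<d. g a * cnj (A a b) * cnj (f b))"
      unfolding X2_def by simp
    also have "\<dots> = (\<Sum>a<d. \<Sum>b<d. g a * A b a * cnj (f b))"
    proof (intro sum.cong refl)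
      fix a b assume "a \<in> {..<d}" "b \<in> {..<d}"
      hence "A b a = cnj (A a b)" using herm by blast
      thus "g a * cnj (A a b) * cnj (f b) = g a * A b a * cnj (f b)" by simp
    qed
    also have "\<dots> = (\<Sum>b<d. \<Sum>a<d. g a * A b a * cnj (f b))"
      by (rule sum.swap)
    also have "\<dots> = X1" unfolding X1_def by (simp add: algebra_simps)
    finally show ?thesis .
  qed
  define n where "n = (\<Sum>a<d. (cmod (g a))^2)"
  have "cnj (g a) * g a = complex_of_real ((cmod (g a))^2)" for a
    using complex_norm_square[of "g a"] by (simp add: mult.commute)
  hence ReX2: "Re X2 = n" unfolding X2 n_def by (simp add: Re_sum)
  have ReX1: "Re X1 = n" using ReX2 \<open>cnj X2 = X1\<close> by (metis complex_cnj_cnj Re_complex_of_real complex_cnj_complex_of_real cnj.simps(1))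
  define q where "q = Re (qf d A g)"
  have q0: "q \<ge> 0" using pos q_def by auto
  have n0: "n \<ge> 0" unfolding n_def by (simp add: sum_nonneg)
  have key: "0 \<le> 2 * t * n + t * t * q" for t :: real
  proof -
    have "0 \<le> Re (qf d A (\<lambda>a. f a + of_real t * g a))" using pos by auto
    also have "\<dots> = Re (qf d A f) + t * Re X1 + t * Re X2 + t * t * q"
      unfolding qf_expand X1_def[symmetric] X2_def[symmetric] q_def by simp
    finally show ?thesis using z ReX1 ReX2 by (simp add: algebra_simps)
  qed
  have "n = 0"
  proof (rule ccontr)
    assume "n \<noteq> 0"
    hence np: "n > 0" using n0 by simp
    define t where "t = - n / (q + 1)"
    have qp: "q + 1 > 0" using q0 by simp
    have tq: "t * (q + 1) = - n" unfolding t_def using qp by simp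
    have "0 \<le> (2 * t * n + t * t * q) * (q+1)" using key[of t] qp by simp
    also have "(2 * t * n + t * t * q) * (q+1) = 2 * n * (t * (q+1)) + t * q * (t * (q+1))"
      by (simp add: algebra_simps)
    also have "\<dots> = - 2 * n * n - t * q * n" unfolding tq by simp
    also have "t * q * n = - n * n * q / (q+1)" unfolding t_def by simp
    finally have "0 \<le> - 2 * n * n + n * n * q / (q+1)" by simp
    moreover have "n * n * q / (q+1) \<le> n * n"
      using qp q0 by (simp add: divide_le_eq mult_left_mono)
    ultimately have "0 \<le> - n * n" by simp
    moreover have "n * n > 0" using np by simp
    ultimately show False by simp
  qed
  hence "\<forall>a\<in>{..<d}. (cmod (g a))^2 = 0"
    unfolding n_def by (subst sum_nonneg_eq_0_iff[symmetric]) auto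
  thus ?thesis unfolding g_def by auto
qed



lemma mtrace_mult:
  assumes A: "A \<in> carrier_mat n m" and B: "B \<in> carrier_mat m n"
  shows "mtrace (A * B) = (\<Sum>i<n. \<Sum>k<m. A $$ (i,k) * B $$ (k,i))"
  unfolding mtrace_def using A B
  by (simp add: scalar_prod_def row_def col_def lessThan_atLeast0)

lemma mtrace_cyclic:
  assumes A: "A \<in> carrier_mat n m" and B: "B \<in> carrier_mat m n"
  shows "mtrace (A * B) = mtrace (B * A)"
  unfolding mtrace_mult[OF A B] mtrace_mult[OF B A]
  by (subst sum.swap) (simp add: mult.commute)

lemma poly_factor_root:
  assumes "a \<in> set as"
  shows "poly (\<Prod>x\<leftarrow>as. [:- x, 1:]) (a::complex) = 0"
  using assms by (induct as) auto

lemma herm_zero: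
  assumes herm: "hermitian d G"
    and ev: "\<forall>v \<mu>. eigenvector G v \<mu> \<longrightarrow> \<mu> = 0"
  shows "\<forall>a<d. \<forall>b<d. G $$ (a,b) = 0"
proof -
  have Gc: "G \<in> carrier_mat d d" and hG: "\<forall>a<d. \<forall>b<d. G $$ (b,a) = cnj (G $$ (a,b))"
    using herm[unfolded hermitian_iff] by blast+
  obtain as where cp: "char_poly G = (\<Prod>a\<leftarrow>as. [:- a, 1:])" and len: "length as = d"
    using char_poly_factorized[OF Gc] by blast
  have as0: "\<forall>a\<in>set as. a = 0"
  proof
    fix a assume a: "a \<in> set as"
    have "poly (char_poly G) a = 0" unfolding cp by (rule poly_factor_root[OF a])
    hence "eigenvalue G a" using eigenvalue_root_char_poly[OF Gc] by simp
    then obtain v where "eigenvector G v a" unfolding eigenvalue_def by blast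
    thus "a = 0" using ev by blast
  qed
  obtain B P Q where sd: "schur_decomposition G as = (B,P,Q)" by (cases "schur_decomposition G as") auto
  from schur_decomposition[OF Gc cp sd]
  have sim: "similar_mat_wit G B P Q" and ut: "upper_triangular B" and dg: "diag_mat B = as" by auto
  note W = similar_mat_witD2[OF Gc sim]
  have Bc: "B \<in> carrier_mat d d" and Pc: "P \<in> carrier_mat d d" and Qc: "Q \<in> carrier_mat d d"
    using W by auto
  have Bd: "B $$ (i,i) = 0" if "i < d" for i
  proof -
    have "B $$ (i,i) = diag_mat B ! i" unfolding diag_mat_def using that Bc by simp
    also have "\<dots> \<in> set as" unfolding dg using that len by simp
    finally show ?thesis using as0 by blast
  qed
  have sim2: "similar_mat_wit (G ^\<^sub>m 2) (B ^\<^sub>m 2) P Q" by (rule similar_mat_wit_pow[OF sim])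
  have G2: "G ^\<^sub>m 2 = G * G" using Gc by (simp add: numeral_2_eq_2)
  have B2: "B ^\<^sub>m 2 = B * B" using Bc by (simp add: numeral_2_eq_2)
  have GG: "G * G = P * (B * B) * Q"
    using similar_mat_witD2(3)[OF _ sim2, of d d] Gc unfolding G2 B2 by simp
  have BBc: "B * B \<in> carrier_mat d d" using Bc by simp
  have "mtrace (G * G) = mtrace ((P * (B * B)) * Q)" unfolding GG ..
  also have "\<dots> = mtrace (Q * (P * (B * B)))"
    by (rule mtrace_cyclic) (use Pc Qc BBc in auto)
  also have "Q * (P * (B * B)) = (Q * P) * (B * B)"
    using Pc Qc BBc by (simp add: assoc_mult_mat)
  also have "\<dots> = B * B" using W BBc by simp
  also have "mtrace (B * B) = (\<Sum>i<d. \<Sum>k<d. B $$ (i,k) * B $$ (k,i))"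
    by (rule mtrace_mult[OF Bc Bc])
  also have "\<dots> = 0"
  proof (intro sum.neutral ballI)
    fix i k assume "i \<in> {..<d}" "k \<in> {..<d}"
    hence ik: "i < d" "k < d" by auto
    show "B $$ (i,k) * B $$ (k,i) = 0"
    proof (cases "k < i")
      case True thus ?thesis using ut Bc ik unfolding upper_triangular_def by auto
    next
      case False
      show ?thesis
      proof (cases "i < k")
        case True thus ?thesis using ut Bc ik unfolding upper_triangular_def by auto
      next
        case False
        hence "i = k" using \<open>\<not> k < i\<close> by simp
        thus ?thesis using Bd ik by simp
      qed
    qed
  qed
  finally have tr0: "mtrace (G * G) = 0" .
  have "mtrace (G * G) = (\<Sum>i<d. \<Sum>k<d. G $$ (i,k) * G $$ (k,i))"
    by (rule mtrace_mult[OF Gc Gc])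
  also have "\<dots> = (\<Sum>i<d. \<Sum>k<d. complex_of_real ((cmod (G $$ (i,k)))^2))"
  proof (intro sum.cong refl)
    fix i k assume "i \<in> {..<d}" "k \<in> {..<d}"
    hence "G $$ (k,i) = cnj (G $$ (i,k))" using hG by blast
    thus "G $$ (i,k) * G $$ (k,i) = complex_of_real ((cmod (G $$ (i,k)))^2)"
      using complex_norm_square[of "G $$ (i,k)"] by simp
  qed
  also have "\<dots> = complex_of_real (\<Sum>i<d. \<Sum>k<d. (cmod (G $$ (i,k)))^2)" by (simp only: of_real_sum)
  finally have "complex_of_real (\<Sum>i<d. \<Sum>k<d. (cmod (G $$ (i,k)))^2) = 0" using tr0 by metis
  hence "(\<Sum>i<d. \<Sum>k<d. (cmod (G $$ (i,k)))^2) = 0" by (simp only: of_real_eq_0_iff)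
  hence "\<forall>i\<in>{..<d}. (\<Sum>k<d. (cmod (G $$ (i,k)))^2) = 0"
    by (subst sum_nonneg_eq_0_iff[symmetric]) (auto intro: sum_nonneg)
  hence "\<forall>i\<in>{..<d}. \<forall>k\<in>{..<d}. (cmod (G $$ (i,k)))^2 = 0"
    by (metis (no_types, lifting) finite_lessThan sum_nonneg_eq_0_iff zero_le_power2)
  thus ?thesis by auto
qed



lemma mult_vec_sum:
  assumes "A \<in> carrier_mat d d" "v \<in> carrier_vec d" "a < d"
  shows "(A *\<^sub>v v) $ a = (\<Sum>b<d. A $$ (a,b) * v $ b)"
  using assms by (simp add: scalar_prod_def row_def lessThan_atLeast0)

lemma eigenvector_sum:
  assumes A: "A \<in> carrier_mat d d" and ev: "eigenvector A v \<mu>"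
  shows "v \<in> carrier_vec d" "\<forall>a<d. (\<Sum>b<d. A $$ (a,b) * v $ b) = \<mu> * v $ a" "\<exists>a<d. v $ a \<noteq> 0"
proof -
  show v: "v \<in> carrier_vec d" using ev A unfolding eigenvector_def by auto
  have e: "A *\<^sub>v v = \<mu> \<cdot>\<^sub>v v" and nz: "v \<noteq> 0\<^sub>v d" using ev A unfolding eigenvector_def by auto
  show "\<forall>a<d. (\<Sum>b<d. A $$ (a,b) * v $ b) = \<mu> * v $ a"
  proof (intro allI impI)
    fix a assume a: "a < d"
    have "(A *\<^sub>v v) $ a = (\<mu> \<cdot>\<^sub>v v) $ a" using e by simp
    thus "(\<Sum>b<d. A $$ (a,b) * v $ b) = \<mu> * v $ a" using mult_vec_sum[OF A v a] a v by simp
  qed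
  show "\<exists>a<d. v $ a \<noteq> 0"
  proof (rule ccontr)
    assume "\<not> (\<exists>a<d. v $ a \<noteq> 0)"
    hence "v = 0\<^sub>v d" using v by (intro eq_vecI) auto
    thus False using nz by simp
  qed
qed

lemma ev_exists:
  fixes c :: real
  assumes herm: "hermitian d H"
    and ne: "\<exists>a<d. \<exists>b<d. H $$ (a,b) \<noteq> (if a = b then complex_of_real c else 0)"
  shows "\<exists>v \<mu>. eigenvector H v \<mu> \<and> \<mu> \<noteq> complex_of_real c"
proof (rule ccontr)
  assume nex: "\<not> (\<exists>v \<mu>. eigenvector H v \<mu> \<and> \<mu> \<noteq> complex_of_real c)"
  have Hc: "H \<in> carrier_mat d d" and hH: "\<forall>a<d. \<forall>b<d. H $$ (b,a) = cnj (H $$ (a,b))"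
    using herm[unfolded hermitian_iff] by blast+
  define G where "G = mat d d (\<lambda>(a,b). H $$ (a,b) - (if a = b then complex_of_real c else 0))"
  have Gc: "G \<in> carrier_mat d d" unfolding G_def by simp
  have Ge: "G $$ (a,b) = H $$ (a,b) - (if a = b then complex_of_real c else 0)" if "a < d" "b < d" for a b
    unfolding G_def using that by simp
  have hG: "hermitian d G" unfolding hermitian_iff
  proof (intro conjI Gc allI impI)
    fix a b assume ab: "a < d" "b < d"
    have "H $$ (b,a) = cnj (H $$ (a,b))" using hH ab by blast
    thus "G $$ (b,a) = cnj (G $$ (a,b))" using ab by (simp add: Ge)
  qed
  have "\<forall>v \<mu>. eigenvector G v \<mu> \<longrightarrow> \<mu> = 0"
  proof (intro allI impI)
    fix v \<mu> assume ev: "eigenvector G v \<mu>"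
    note es = eigenvector_sum[OF Gc ev]
    have "eigenvector H v (\<mu> + complex_of_real c)"
      unfolding eigenvector_def
    proof (intro conjI)
      show "v \<in> carrier_vec (dim_row H)" using es Hc by simp
      show "v \<noteq> 0\<^sub>v (dim_row H)" using ev Gc Hc unfolding eigenvector_def by simp
      show "H *\<^sub>v v = (\<mu> + complex_of_real c) \<cdot>\<^sub>v v"
      proof (rule eq_vecI)
        fix a assume "a < dim_vec ((\<mu> + complex_of_real c) \<cdot>\<^sub>v v)"
        hence a: "a < d" using es by simp
        have "(H *\<^sub>v v) $ a = (\<Sum>b<d. H $$ (a,b) * v $ b)" by (rule mult_vec_sum[OF Hc es(1) a])
        also have "\<dots> = (\<Sum>b<d. G $$ (a,b) * v $ b + (if a = b then complex_of_real c * v $ b else 0))"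
          by (intro sum.cong refl) (use a in \<open>auto simp: Ge algebra_simps\<close>)
        also have "\<dots> = \<mu> * v $ a + complex_of_real c * v $ a"
          using es(2) a by (simp add: sum.distrib)
        finally show "(H *\<^sub>v v) $ a = ((\<mu> + complex_of_real c) \<cdot>\<^sub>v v) $ a"
          using a es by (simp add: algebra_simps)
      qed (use Hc es in simp)
    qed
    hence "\<mu> + complex_of_real c = complex_of_real c" using nex by blast
    thus "\<mu> = 0" by simp
  qed
  from herm_zero[OF hG this] have "\<forall>a<d. \<forall>b<d. G $$ (a,b) = 0" .
  thus False using ne Ge by auto
qed



lemma norm_sum: fixes f :: "nat \<Rightarrow> complex" shows "(\<Sum>a<d. cnj (f a) * f a) = complex_of_real (\<Sum>a<d. (cmod (f a))^2)"
proof -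
  have "cnj (f a) * f a = complex_of_real ((cmod (f a))^2)" for a
    using complex_norm_square[of "f a"] by (simp add: mult.commute)
  thus ?thesis by (simp add: of_real_sum)
qed

lemma norm_sum_pos: fixes f :: "nat \<Rightarrow> complex" assumes "\<exists>a<d. f a \<noteq> 0" shows "(\<Sum>a<d. (cmod (f a))^2) > 0"
proof -
  from assms obtain a where a: "a < d" "f a \<noteq> 0" by blast
  have "(cmod (f a))^2 \<le> (\<Sum>a<d. (cmod (f a))^2)"
    by (rule member_le_sum) (use a in auto)
  moreover have "(cmod (f a))^2 > 0" using a by simp
  ultimately show ?thesis by linarith
qed

lemma swap_form:
  fixes g f :: "nat \<Rightarrow> complex" and B :: "nat \<Rightarrow> nat \<Rightarrow> complex"
  shows "(\<Sum>a<d. g a * (\<Sum>b<d. B a b * f b)) = (\<Sum>b<d. (\<Sum>a<d. g a * B a b) * f b)"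
proof -
  have "(\<Sum>a<d. g a * (\<Sum>b<d. B a b * f b)) = (\<Sum>a<d. \<Sum>b<d. g a * B a b * f b)"
    by (simp add: sum_distrib_left mult.assoc)
  also have "\<dots> = (\<Sum>b<d. \<Sum>a<d. g a * B a b * f b)" by (rule sum.swap)
  also have "\<dots> = (\<Sum>b<d. (\<Sum>a<d. g a * B a b) * f b)" by (simp add: sum_distrib_right)
  finally show ?thesis .
qed

lemma herm_eig_real:
  fixes A :: "nat \<Rightarrow> nat \<Rightarrow> complex" and f :: "nat \<Rightarrow> complex"
  assumes hA: "\<forall>a<d. \<forall>b<d. A b a = cnj (A a b)"
    and eig: "\<forall>a<d. (\<Sum>b<d. A a b * f b) = \<mu> * f a"
    and nz: "\<exists>a<d. f a \<noteq> 0"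
  shows "cnj \<mu> = \<mu>"
proof -
  define X where "X = (\<Sum>a<d. cnj (f a) * (\<Sum>b<d. A a b * f b))"
  define N where "N = (\<Sum>a<d. cnj (f a) * f a)"
  have X: "X = \<mu> * N" unfolding X_def N_def
    using eig by (simp add: sum_distrib_left algebra_simps)
  have "cnj X = (\<Sum>a<d. f a * (\<Sum>b<d. cnj (A a b) * cnj (f b)))" unfolding X_def by simp
  also have "\<dots> = (\<Sum>a<d. f a * (\<Sum>b<d. A b a * cnj (f b)))"
  proof (intro sum.cong refl)
    fix a assume a: "a \<in> {..<d}"
    have "(\<Sum>b<d. cnj (A a b) * cnj (f b)) = (\<Sum>b<d. A b a * cnj (f b))"
    proof (intro sum.cong refl)
      fix b assume "b \<in> {..<d}"
      hence "A b a = cnj (A a b)" using hA a by blast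
      thus "cnj (A a b) * cnj (f b) = A b a * cnj (f b)" by simp
    qed
    thus "f a * (\<Sum>b<d. cnj (A a b) * cnj (f b)) = f a * (\<Sum>b<d. A b a * cnj (f b))" by simp
  qed
  also have "\<dots> = (\<Sum>b<d. (\<Sum>a<d. f a * A b a) * cnj (f b))" by (rule swap_form[where B="\<lambda>a b. A b a"])
  also have "\<dots> = X" unfolding X_def by (simp add: sum_distrib_left sum_distrib_right algebra_simps)
  finally have cX: "cnj X = X" .
  have N: "N = complex_of_real (\<Sum>a<d. (cmod (f a))^2)" unfolding N_def by (rule norm_sum)
  have Nz: "N \<noteq> 0" unfolding N using norm_sum_pos[OF nz] by (simp only: of_real_eq_0_iff)
  have "cnj \<mu> * N = \<mu> * N" using cX unfolding X N by simp
  thus ?thesis using Nz by simp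
qed

lemma orth_from_ev:
  fixes c :: real and B :: "nat \<Rightarrow> nat \<Rightarrow> complex" and f w :: "nat \<Rightarrow> complex"
  assumes hB: "\<forall>a<d. \<forall>b<d. B b a = cnj (B a b)"
    and Bw: "\<forall>a<d. (\<Sum>b<d. B a b * w b) = complex_of_real c * w a"
    and Bf: "\<forall>a<d. (\<Sum>b<d. B a b * f b) = \<mu> * f a"
    and ne: "\<mu> \<noteq> complex_of_real c"
  shows "(\<Sum>a<d. cnj (w a) * f a) = 0"
proof -
  define z where "z = (\<Sum>a<d. cnj (w a) * f a)"
  have "(\<Sum>a<d. cnj (w a) * (\<Sum>b<d. B a b * f b)) = \<mu> * z"
    unfolding z_def using Bf by (simp add: sum_distrib_left algebra_simps)
  moreover have "(\<Sum>a<d. cnj (w a) * (\<Sum>b<d. B a b * f b)) = complex_of_real c * z"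
  proof -
    have "(\<Sum>a<d. cnj (w a) * (\<Sum>b<d. B a b * f b)) = (\<Sum>b<d. (\<Sum>a<d. cnj (w a) * B a b) * f b)"
      by (rule swap_form[where g="\<lambda>a. cnj (w a)"])
    also have "\<dots> = (\<Sum>b<d. (complex_of_real c * cnj (w b)) * f b)"
    proof (intro sum.cong refl)
      fix b assume b: "b \<in> {..<d}"
      have "(\<Sum>a<d. cnj (w a) * B a b) = (\<Sum>a<d. cnj (B b a * w a))"
      proof (intro sum.cong refl)
        fix a assume "a \<in> {..<d}"
        hence "B a b = cnj (B b a)" using hB b by blast
        thus "cnj (w a) * B a b = cnj (B b a * w a)" by simp
      qed
      also have "\<dots> = cnj (\<Sum>a<d. B b a * w a)" by simp
      also have "\<dots> = cnj (complex_of_real c * w b)" using Bw b by simp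
      finally show "(\<Sum>a<d. cnj (w a) * B a b) * f b = (complex_of_real c * cnj (w b)) * f b" by simp
    qed
    also have "\<dots> = complex_of_real c * z" unfolding z_def by (simp add: sum_distrib_left algebra_simps)
    finally show ?thesis .
  qed
  ultimately have "(\<mu> - complex_of_real c) * z = 0" by (simp add: algebra_simps)
  thus ?thesis using ne unfolding z_def by simp
qed



lemma orth_contract:
  fixes g :: "nat \<Rightarrow> complex" and u :: "nat \<Rightarrow> nat \<Rightarrow> complex" and f :: "nat \<Rightarrow> complex"
  shows "(\<Sum>b<d. (\<Sum>i<k. g i * cnj (u i b)) * f b) = (\<Sum>i<k. g i * (\<Sum>b<d. cnj (u i b) * f b))"
proof -
  have "(\<Sum>b<d. (\<Sum>i<k. g i * cnj (u i b)) * f b) = (\<Sum>b<d. \<Sum>i<k. g i * cnj (u i b) * f b)"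
    by (simp add: sum_distrib_right)
  also have "\<dots> = (\<Sum>i<k. \<Sum>b<d. g i * cnj (u i b) * f b)" by (rule sum.swap)
  also have "\<dots> = (\<Sum>i<k. g i * (\<Sum>b<d. cnj (u i b) * f b))" by (simp add: sum_distrib_left mult.assoc)
  finally show ?thesis .
qed

lemma spec_step:
  fixes A :: "complex mat" and u :: "nat \<Rightarrow> nat \<Rightarrow> complex" and lam :: "nat \<Rightarrow> real"
  assumes herm: "hermitian d A" and k: "k < d"
    and eig: "\<forall>i<k. \<forall>a<d. (\<Sum>b<d. A $$ (a,b) * u i b) = complex_of_real (lam i) * u i a"
    and orth: "\<forall>i<k. \<forall>j<k. (\<Sum>a<d. cnj (u i a) * u j a) = (if i = j then 1 else 0)"
  shows "\<exists>f l. (\<forall>a<d. (\<Sum>b<d. A $$ (a,b) * f b) = complex_of_real l * f a)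
           \<and> (\<Sum>a<d. cnj (f a) * f a) = 1 \<and> (\<forall>i<k. (\<Sum>a<d. cnj (u i a) * f a) = 0)"
proof -
  have Acar: "A \<in> carrier_mat d d" and hA: "\<forall>a<d. \<forall>b<d. A $$ (b,a) = cnj (A $$ (a,b))"
    using herm[unfolded hermitian_iff] by blast+
  define T where "T c a b = (\<Sum>i<k. complex_of_real (c - lam i) * u i a * cnj (u i b))" for c a b
  define Ac where "Ac c = mat d d (\<lambda>(a,b). A $$ (a,b) + T c a b)" for c
  have Acc: "Ac c \<in> carrier_mat d d" for c unfolding Ac_def by simp
  have Ace: "Ac c $$ (a,b) = A $$ (a,b) + T c a b" if "a < d" "b < d" for a b c
    unfolding Ac_def using that by simp
  have hT: "T c b a = cnj (T c a b)" for a b c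
    unfolding T_def by (simp add: mult.commute mult.left_commute)
  have hAc: "hermitian d (Ac c)" for c
    unfolding hermitian_iff
  proof (intro conjI Acc allI impI)
    fix a b assume ab: "a < d" "b < d"
    have "A $$ (b,a) = cnj (A $$ (a,b))" using hA ab by blast
    moreover have "T c b a = cnj (T c a b)" by (rule hT)
    ultimately show "Ac c $$ (b,a) = cnj (Ac c $$ (a,b))" using ab by (simp add: Ace)
  qed
  have TU: "(\<Sum>b<d. T c a b * u j b) = complex_of_real (c - lam j) * u j a" if j: "j < k" for c a j
  proof -
    have "(\<Sum>b<d. T c a b * u j b) = (\<Sum>i<k. (complex_of_real (c - lam i) * u i a) * (\<Sum>b<d. cnj (u i b) * u j b))"
      unfolding T_def by (rule orth_contract)
    also have "\<dots> = (\<Sum>i<k. (complex_of_real (c - lam i) * u i a) * (if i = j then 1 else 0))"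
      by (intro sum.cong refl) (use orth j in auto)
    also have "\<dots> = complex_of_real (c - lam j) * u j a" using j by (simp add: if_distrib cong: if_cong)
    finally show ?thesis .
  qed
  have Acu: "\<forall>a<d. (\<Sum>b<d. Ac c $$ (a,b) * u j b) = complex_of_real c * u j a" if j: "j < k" for c j
  proof (intro allI impI)
    fix a assume a: "a < d"
    have "(\<Sum>b<d. Ac c $$ (a,b) * u j b) = (\<Sum>b<d. A $$ (a,b) * u j b) + (\<Sum>b<d. T c a b * u j b)"
      using a by (simp add: Ace algebra_simps sum.distrib)
    also have "\<dots> = complex_of_real (lam j) * u j a + complex_of_real (c - lam j) * u j a"
      using eig j a TU[OF j] by simp
    also have "\<dots> = complex_of_real c * u j a" by (simp add: algebra_simps)
    finally show "(\<Sum>b<d. Ac c $$ (a,b) * u j b) = complex_of_real c * u j a" .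
  qed
  have TF: "(\<Sum>b<d. T c a b * f b) = 0" if "\<forall>i<k. (\<Sum>b<d. cnj (u i b) * f b) = 0" for c a f
  proof -
    have "(\<Sum>b<d. T c a b * f b) = (\<Sum>i<k. (complex_of_real (c - lam i) * u i a) * (\<Sum>b<d. cnj (u i b) * f b))"
      unfolding T_def by (rule orth_contract)
    also have "\<dots> = 0" using that by simp
    finally show ?thesis .
  qed
  have main: "\<exists>f l. (\<forall>a<d. (\<Sum>b<d. A $$ (a,b) * f b) = complex_of_real l * f a)
           \<and> (\<Sum>a<d. cnj (f a) * f a) = 1 \<and> (\<forall>i<k. (\<Sum>a<d. cnj (u i a) * f a) = 0)"
    if ev: "eigenvector (Ac c) v \<mu>" and ne: "\<mu> \<noteq> complex_of_real c" for c v \<mu>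
  proof -
    note es = eigenvector_sum[OF Acc ev]
    define f0 where "f0 b = v $ b" for b
    have Bf: "\<forall>a<d. (\<Sum>b<d. Ac c $$ (a,b) * f0 b) = \<mu> * f0 a" using es(2) unfolding f0_def .
    have nz: "\<exists>a<d. f0 a \<noteq> 0" using es(3) unfolding f0_def .
    have hB: "\<forall>a<d. \<forall>b<d. Ac c $$ (b,a) = cnj (Ac c $$ (a,b))"
      using hAc[of c, unfolded hermitian_iff] by blast
    have orth0: "\<forall>i<k. (\<Sum>a<d. cnj (u i a) * f0 a) = 0"
    proof (intro allI impI)
      fix i assume i: "i < k"
      show "(\<Sum>a<d. cnj (u i a) * f0 a) = 0"
        by (rule orth_from_ev[where B="\<lambda>a b. Ac c $$ (a,b)", OF hB Acu[OF i] Bf ne])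
    qed
    have Af0: "\<forall>a<d. (\<Sum>b<d. A $$ (a,b) * f0 b) = \<mu> * f0 a"
    proof (intro allI impI)
      fix a assume a: "a < d"
      have "(\<Sum>b<d. Ac c $$ (a,b) * f0 b) = (\<Sum>b<d. A $$ (a,b) * f0 b) + (\<Sum>b<d. T c a b * f0 b)"
        using a by (simp add: Ace algebra_simps sum.distrib)
      also have "(\<Sum>b<d. T c a b * f0 b) = 0" by (rule TF) (use orth0 in auto)
      finally show "(\<Sum>b<d. A $$ (a,b) * f0 b) = \<mu> * f0 a" using Bf a by simp
    qed
    have cmu: "cnj \<mu> = \<mu>"
      by (rule herm_eig_real[where A="\<lambda>a b. A $$ (a,b)", OF hA Af0 nz])
    define l where "l = Re \<mu>"
    have mul: "\<mu> = complex_of_real l" unfolding l_def using cmu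
      by (metis Reals_cnj_iff complex_is_Real_iff of_real_Re)
    define n where "n = (\<Sum>a<d. (cmod (f0 a))^2)"
    have np: "n > 0" unfolding n_def by (rule norm_sum_pos[OF nz])
    define s where "s = 1 / sqrt n"
    define f where "f a = complex_of_real s * f0 a" for a
    show ?thesis
    proof (intro exI conjI)
      show "\<forall>a<d. (\<Sum>b<d. A $$ (a,b) * f b) = complex_of_real l * f a"
      proof (intro allI impI)
        fix a assume a: "a < d"
        have "(\<Sum>b<d. A $$ (a,b) * f b) = complex_of_real s * (\<Sum>b<d. A $$ (a,b) * f0 b)"
          unfolding f_def by (simp add: sum_distrib_left algebra_simps)
        also have "\<dots> = complex_of_real s * (\<mu> * f0 a)" using Af0 a by simp
        finally show "(\<Sum>b<d. A $$ (a,b) * f b) = complex_of_real l * f a"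
          unfolding f_def mul by (simp add: algebra_simps)
      qed
      show "\<forall>i<k. (\<Sum>a<d. cnj (u i a) * f a) = 0"
        using orth0 unfolding f_def by (simp add: algebra_simps flip: sum_distrib_left)
      have "(\<Sum>a<d. cnj (f a) * f a) = complex_of_real (s * s) * (\<Sum>a<d. cnj (f0 a) * f0 a)"
        unfolding f_def by (simp add: sum_distrib_left algebra_simps)
      also have "\<dots> = complex_of_real (s * s * n)" unfolding norm_sum n_def by simp
      also have "s * s * n = 1" unfolding s_def using np
        by (simp add: field_simps)
      finally show "(\<Sum>a<d. cnj (f a) * f a) = 1" by simp
    qed
  qed
  show ?thesis
  proof (cases "\<exists>a<d. \<exists>b<d. Ac 0 $$ (a,b) \<noteq> (if a = b then complex_of_real 0 else 0)")
    case True
    then obtain v \<mu> where "eigenvector (Ac 0) v \<mu>" "\<mu> \<noteq> complex_of_real 0"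
      using ev_exists[OF hAc] by blast
    thus ?thesis using main by blast
  next
    case F0: False
    show ?thesis
    proof (cases "\<exists>a<d. \<exists>b<d. Ac 1 $$ (a,b) \<noteq> (if a = b then complex_of_real 1 else 0)")
      case True
      then obtain v \<mu> where "eigenvector (Ac 1) v \<mu>" "\<mu> \<noteq> complex_of_real 1"
        using ev_exists[OF hAc] by blast
      thus ?thesis using main by blast
    next
      case F1: False
      have diag: "(\<Sum>i<k. u i a * cnj (u i a)) = 1" if a: "a < d" for a
      proof -
        have "Ac 1 $$ (a,a) - Ac 0 $$ (a,a) = 1" using F0 F1 a by auto
        hence "T 1 a a - T 0 a a = 1" using a by (simp add: Ace)
        moreover have "T 1 a a - T 0 a a = (\<Sum>i<k. u i a * cnj (u i a))"
          unfolding T_def by (simp add: algebra_simps flip: sum_subtractf)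
        ultimately show ?thesis by simp
      qed
      have "of_nat d = (\<Sum>a<d. (1::complex))" by simp
      also have "\<dots> = (\<Sum>a<d. \<Sum>i<k. u i a * cnj (u i a))" using diag by simp
      also have "\<dots> = (\<Sum>i<k. \<Sum>a<d. cnj (u i a) * u i a)" by (subst sum.swap) (simp add: mult.commute)
      also have "\<dots> = (\<Sum>i<k. (1::complex))" using orth by simp
      also have "\<dots> = of_nat k" by simp
      finally have "d = k" by (simp only: of_nat_eq_iff)
      thus ?thesis using k by simp
    qed
  qed
qed



lemma spectral_k:
  fixes A :: "complex mat"
  assumes herm: "hermitian d A"
  shows "k \<le> d \<Longrightarrow> \<exists>u lam. (\<forall>i<k. \<forall>a<d. (\<Sum>b<d. A $$ (a,b) * u i b) = complex_of_real (lam i) * u i a)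
     \<and> (\<forall>i<k. \<forall>j<k. (\<Sum>a<d. cnj (u i a) * u j a) = (if i = j then 1 else 0))"
proof (induction k)
  case 0 show ?case by simp
next
  case (Suc k)
  then obtain u lam where eig: "\<forall>i<k. \<forall>a<d. (\<Sum>b<d. A $$ (a,b) * u i b) = complex_of_real (lam i) * u i a"
    and orth: "\<forall>i<k. \<forall>j<k. (\<Sum>a<d. cnj (u i a) * u j a) = (if i = j then 1 else 0)" by auto
  have kd: "k < d" using Suc by simp
  obtain f l where fe: "\<forall>a<d. (\<Sum>b<d. A $$ (a,b) * f b) = complex_of_real l * f a"
    and fn: "(\<Sum>a<d. cnj (f a) * f a) = 1" and fo: "\<forall>i<k. (\<Sum>a<d. cnj (u i a) * f a) = 0"
    using spec_step[OF herm kd eig orth] by blast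
  define u' where "u' = u(k := f)"
  define lam' where "lam' = lam(k := l)"
  show ?case
  proof (intro exI[of _ u'] exI[of _ lam'] conjI allI impI)
    fix i a assume i: "i < Suc k" and a: "a < d"
    show "(\<Sum>b<d. A $$ (a,b) * u' i b) = complex_of_real (lam' i) * u' i a"
    proof (cases "i = k")
      case True thus ?thesis using fe a unfolding u'_def lam'_def by simp
    next
      case False thus ?thesis using eig a i unfolding u'_def lam'_def by simp
    qed
  next
    fix i j assume i: "i < Suc k" and j: "j < Suc k"
    show "(\<Sum>a<d. cnj (u' i a) * u' j a) = (if i = j then 1 else 0)"
    proof (cases "i = k")
      case True
      show ?thesis
      proof (cases "j = k")
        case True thus ?thesis using \<open>i = k\<close> fn unfolding u'_def by simp
      next
        case False
        hence jk: "j < k" using j by simp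
        have "(\<Sum>a<d. cnj (f a) * u j a) = cnj (\<Sum>a<d. cnj (u j a) * f a)" by (simp add: mult.commute)
        also have "\<dots> = 0" using fo jk by simp
        finally show ?thesis using \<open>i = k\<close> False unfolding u'_def by simp
      qed
    next
      case False
      hence ik: "i < k" using i by simp
      show ?thesis
      proof (cases "j = k")
        case True thus ?thesis using fo ik unfolding u'_def by simp
      next
        case False
        hence jk: "j < k" using j by simp
        thus ?thesis using orth ik \<open>i \<noteq> k\<close> False unfolding u'_def by simp
      qed
    qed
  qed
qed

lemma complete:
  fixes u :: "nat \<Rightarrow> nat \<Rightarrow> complex"
  assumes orth: "\<forall>i<d. \<forall>j<d. (\<Sum>a<d. cnj (u i a) * u j a) = (if i = j then 1 else 0)"
  shows "\<forall>a<d. \<forall>b<d. (\<Sum>i<d. u i a * cnj (u i b)) = (if a = b then 1 else 0)"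
proof -
  define U where "U = mat d d (\<lambda>(a,i). u i a)"
  define V where "V = mat d d (\<lambda>(i,b). cnj (u i b))"
  have Uc: "U \<in> carrier_mat d d" and Vc: "V \<in> carrier_mat d d" unfolding U_def V_def by auto
  have VU: "V * U = 1\<^sub>m d"
  proof (rule eq_matI)
    fix i j assume "i < dim_row (1\<^sub>m d)" "j < dim_col (1\<^sub>m d)"
    hence ij: "i < d" "j < d" by auto
    have "(V * U) $$ (i,j) = (\<Sum>a<d. cnj (u i a) * u j a)"
      using ij Uc Vc unfolding U_def V_def by (simp add: scalar_prod_def row_def col_def lessThan_atLeast0)
    thus "(V * U) $$ (i,j) = 1\<^sub>m d $$ (i,j)" using orth ij by simp
  qed (use Vc Uc in auto)
  have UV: "U * V = 1\<^sub>m d" by (rule mat_mult_left_right_inverse[OF Vc Uc VU])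
  show ?thesis
  proof (intro allI impI)
    fix a b assume ab: "a < d" "b < d"
    have "(U * V) $$ (a,b) = (\<Sum>i<d. u i a * cnj (u i b))"
      using ab Uc Vc unfolding U_def V_def by (simp add: scalar_prod_def row_def col_def lessThan_atLeast0)
    thus "(\<Sum>i<d. u i a * cnj (u i b)) = (if a = b then 1 else 0)" using UV ab by simp
  qed
qed

lemma spectral:
  fixes A :: "complex mat"
  assumes herm: "hermitian d A"
  shows "\<exists>u lam. (\<forall>i<d. \<forall>j<d. (\<Sum>a<d. cnj (u i a) * u j a) = (if i = j then 1 else 0))
     \<and> (\<forall>a<d. \<forall>b<d. (\<Sum>i<d. u i a * cnj (u i b)) = (if a = b then 1 else 0))
     \<and> (\<forall>a<d. \<forall>b<d. A $$ (a,b) = (\<Sum>i<d. complex_of_real (lam i) * u i a * cnj (u i b)))"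
proof -
  obtain u lam where eig: "\<forall>i<d. \<forall>a<d. (\<Sum>b<d. A $$ (a,b) * u i b) = complex_of_real (lam i) * u i a"
    and orth: "\<forall>i<d. \<forall>j<d. (\<Sum>a<d. cnj (u i a) * u j a) = (if i = j then 1 else 0)"
    using spectral_k[OF herm, of d] by auto
  note compl = complete[OF orth]
  have dec: "A $$ (a,b) = (\<Sum>i<d. complex_of_real (lam i) * u i a * cnj (u i b))" if ab: "a < d" "b < d" for a b
  proof -
    have "(\<Sum>i<d. complex_of_real (lam i) * u i a * cnj (u i b)) = (\<Sum>i<d. (\<Sum>c<d. A $$ (a,c) * u i c) * cnj (u i b))"
      using eig ab by simp
    also have "\<dots> = (\<Sum>i<d. \<Sum>c<d. A $$ (a,c) * (u i c * cnj (u i b)))"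
      by (simp add: sum_distrib_right mult.assoc)
    also have "\<dots> = (\<Sum>c<d. \<Sum>i<d. A $$ (a,c) * (u i c * cnj (u i b)))" by (rule sum.swap)
    also have "\<dots> = (\<Sum>c<d. A $$ (a,c) * (\<Sum>i<d. u i c * cnj (u i b)))" by (simp add: sum_distrib_left)
    also have "\<dots> = (\<Sum>c<d. A $$ (a,c) * (if c = b then 1 else 0))"
      by (intro sum.cong refl) (use compl ab in simp)
    also have "\<dots> = A $$ (a,b)" using ab by (simp add: if_distrib cong: if_cong)
    finally show ?thesis by simp
  qed
  show ?thesis using orth compl dec by blast
qed



lemma psd_carrier: "psd d A \<Longrightarrow> A \<in> carrier_mat d d"
  unfolding psd_def hermitian_def by auto

lemma triple_swap:
  fixes X :: "nat \<Rightarrow> nat \<Rightarrow> nat \<Rightarrow> complex"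
  shows "(\<Sum>a<d. \<Sum>b<d. \<Sum>i<k. X i a b) = (\<Sum>i<k. \<Sum>a<d. \<Sum>b<d. X i a b)"
proof -
  have "(\<Sum>a<d. \<Sum>b<d. \<Sum>i<k. X i a b) = (\<Sum>a<d. \<Sum>i<k. \<Sum>b<d. X i a b)"
    by (rule sum.cong[OF refl]) (rule sum.swap)
  also have "\<dots> = (\<Sum>i<k. \<Sum>a<d. \<Sum>b<d. X i a b)" by (rule sum.swap)
  finally show ?thesis .
qed

lemma form_dec:
  fixes f h g :: "nat \<Rightarrow> complex" and u :: "nat \<Rightarrow> nat \<Rightarrow> complex"
  shows "(\<Sum>a<d. \<Sum>b<d. cnj (f a) * (\<Sum>i<d. g i * u i a * cnj (u i b)) * h b)
       = (\<Sum>i<d. g i * (\<Sum>a<d. cnj (f a) * u i a) * (\<Sum>b<d. cnj (u i b) * h b))"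
proof -
  define X where "X i a b = g i * (cnj (f a) * u i a) * (cnj (u i b) * h b)" for i a b
  have "(\<Sum>a<d. \<Sum>b<d. cnj (f a) * (\<Sum>i<d. g i * u i a * cnj (u i b)) * h b) = (\<Sum>a<d. \<Sum>b<d. \<Sum>i<d. X i a b)"
    unfolding X_def by (simp add: sum_distrib_left sum_distrib_right ac_simps)
  also have "\<dots> = (\<Sum>i<d. \<Sum>a<d. \<Sum>b<d. X i a b)" by (rule triple_swap)
  also have "\<dots> = (\<Sum>i<d. g i * (\<Sum>a<d. cnj (f a) * u i a) * (\<Sum>b<d. cnj (u i b) * h b))"
    unfolding X_def by (simp add: sum_distrib_left sum_distrib_right ac_simps)
  finally show ?thesis .
qed

lemma sq_lemma:
  fixes g h :: "nat \<Rightarrow> complex" and u :: "nat \<Rightarrow> nat \<Rightarrow> complex"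
  assumes orth: "\<forall>i<d. \<forall>j<d. (\<Sum>a<d. cnj (u i a) * u j a) = (if i = j then 1 else 0)"
  shows "(\<Sum>c<d. (\<Sum>i<d. g i * u i a * cnj (u i c)) * (\<Sum>j<d. h j * u j c * cnj (u j b)))
       = (\<Sum>i<d. g i * h i * u i a * cnj (u i b))"
proof -
  define X where "X i c j = (g i * u i a) * (h j * cnj (u j b)) * (cnj (u i c) * u j c)" for i c j
  have "(\<Sum>c<d. (\<Sum>i<d. g i * u i a * cnj (u i c)) * (\<Sum>j<d. h j * u j c * cnj (u j b)))
      = (\<Sum>c<d. \<Sum>i<d. \<Sum>j<d. X i c j)"
    unfolding sum_product X_def by (simp add: ac_simps)
  also have "\<dots> = (\<Sum>i<d. \<Sum>c<d. \<Sum>j<d. X i c j)" by (rule sum.swap)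
  also have "\<dots> = (\<Sum>i<d. \<Sum>j<d. \<Sum>c<d. X i c j)" by (rule sum.cong[OF refl]) (rule sum.swap)
  also have "\<dots> = (\<Sum>i<d. \<Sum>j<d. (g i * u i a) * (h j * cnj (u j b)) * (if i = j then 1 else 0))"
  proof (intro sum.cong refl)
    fix i j assume "i \<in> {..<d}" "j \<in> {..<d}"
    hence "(\<Sum>c<d. cnj (u i c) * u j c) = (if i = j then 1 else 0)" using orth by simp
    thus "(\<Sum>c<d. X i c j) = (g i * u i a) * (h j * cnj (u j b)) * (if i = j then 1 else 0)"
      unfolding X_def by (simp add: sum_distrib_left[symmetric])
  qed
  also have "\<dots> = (\<Sum>i<d. g i * h i * u i a * cnj (u i b))"
    by (simp add: if_distrib ac_simps cong: if_cong)
  finally show ?thesis .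
qed

lemma psd_eig_nonneg:
  fixes u :: "nat \<Rightarrow> nat \<Rightarrow> complex"
  assumes psd: "psd d S"
    and orth: "\<forall>i<d. \<forall>j<d. (\<Sum>a<d. cnj (u i a) * u j a) = (if i = j then 1 else 0)"
    and dec: "\<forall>a<d. \<forall>b<d. S $$ (a,b) = (\<Sum>i<d. complex_of_real (lam i) * u i a * cnj (u i b))"
    and i: "i < d"
  shows "lam i \<ge> 0"
proof -
  have "qf d (ent S) (u i) = (\<Sum>a<d. \<Sum>b<d. cnj (u i a) * (\<Sum>j<d. complex_of_real (lam j) * u j a * cnj (u j b)) * u i b)"
    unfolding qf_def ent_def using dec by simp
  also have "\<dots> = (\<Sum>j<d. complex_of_real (lam j) * (\<Sum>a<d. cnj (u i a) * u j a) * (\<Sum>b<d. cnj (u j b) * u i b))"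
    by (rule form_dec)
  also have "\<dots> = (\<Sum>j<d. complex_of_real (lam j) * (if i = j then 1 else 0) * (if j = i then 1 else 0))"
    by (intro sum.cong refl) (use orth i in simp)
  also have "\<dots> = complex_of_real (lam i)" using i by (simp add: if_distrib cong: if_cong)
  finally show ?thesis using psd_form[OF psd, of "u i"] by simp
qed

lemma trace_nonneg:
  assumes pM: "psd d M" and pS: "psd d S"
  shows "0 \<le> Re (mtrace (M * S))"
proof -
  have Mc: "M \<in> carrier_mat d d" and Sc: "S \<in> carrier_mat d d"
    using pM pS by (auto dest: psd_carrier)
  have hS: "hermitian d S" using pS unfolding psd_def by simp
  obtain u lam where orth: "\<forall>i<d. \<forall>j<d. (\<Sum>a<d. cnj (u i a) * u j a) = (if i = j then 1 else 0)"
    and dec: "\<forall>a<d. \<forall>b<d. S $$ (a,b) = (\<Sum>i<d. complex_of_real (lam i) * u i a * cnj (u i b))"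
    using spectral[OF hS] by blast
  have "mtrace (M * S) = (\<Sum>a<d. \<Sum>b<d. M $$ (a,b) * S $$ (b,a))" by (rule mtrace_mult[OF Mc Sc])
  also have "\<dots> = (\<Sum>a<d. \<Sum>b<d. M $$ (a,b) * (\<Sum>i<d. complex_of_real (lam i) * u i b * cnj (u i a)))"
    using dec by simp
  also have "\<dots> = (\<Sum>a<d. \<Sum>b<d. \<Sum>i<d. complex_of_real (lam i) * (cnj (u i a) * ent M a b * u i b))"
    unfolding ent_def by (simp add: sum_distrib_left ac_simps)
  also have "\<dots> = (\<Sum>i<d. \<Sum>a<d. \<Sum>b<d. complex_of_real (lam i) * (cnj (u i a) * ent M a b * u i b))"
    by (rule triple_swap)
  also have "\<dots> = (\<Sum>i<d. complex_of_real (lam i) * qf d (ent M) (u i))"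
    unfolding qf_def by (simp add: sum_distrib_left)
  finally have tr: "Re (mtrace (M * S)) = (\<Sum>i<d. lam i * Re (qf d (ent M) (u i)))"
    by (simp add: Re_sum)
  show ?thesis unfolding tr
  proof (rule sum_nonneg)
    fix i assume "i \<in> {..<d}"
    hence "lam i \<ge> 0" using psd_eig_nonneg[OF pS orth dec] by simp
    thus "0 \<le> lam i * Re (qf d (ent M) (u i))" using psd_form[OF pM] by simp
  qed
qed

lemma sqrt_exists:
  assumes hE: "hermitian d E"
  shows "\<exists>B. psd d B \<and> B * B = E * E"
proof -
  have Ec: "E \<in> carrier_mat d d" using hE unfolding hermitian_def by simp
  obtain u lam where orth: "\<forall>i<d. \<forall>j<d. (\<Sum>a<d. cnj (u i a) * u j a) = (if i = j then 1 else 0)"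
    and dec: "\<forall>a<d. \<forall>b<d. E $$ (a,b) = (\<Sum>i<d. complex_of_real (lam i) * u i a * cnj (u i b))"
    using spectral[OF hE] by blast
  define B where "B = mat d d (\<lambda>(a,b). \<Sum>i<d. complex_of_real \<bar>lam i\<bar> * u i a * cnj (u i b))"
  have Bc: "B \<in> carrier_mat d d" unfolding B_def by simp
  have Be: "B $$ (a,b) = (\<Sum>i<d. complex_of_real \<bar>lam i\<bar> * u i a * cnj (u i b))" if "a < d" "b < d" for a b
    unfolding B_def using that by simp
  have hB: "hermitian d B" unfolding hermitian_iff
    by (intro conjI Bc allI impI) (simp add: Be ac_simps)
  have pB: "psd d B" unfolding psd_iff
  proof (intro conjI hB allI)
    fix f
    have "qf d (ent B) f = (\<Sum>a<d. \<Sum>b<d. cnj (f a) * (\<Sum>i<d. complex_of_real \<bar>lam i\<bar> * u i a * cnj (u i b)) * f b)"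
      unfolding qf_def ent_def by (simp add: Be)
    also have "\<dots> = (\<Sum>i<d. complex_of_real \<bar>lam i\<bar> * (\<Sum>a<d. cnj (f a) * u i a) * (\<Sum>b<d. cnj (u i b) * f b))"
      by (rule form_dec)
    also have "\<dots> = (\<Sum>i<d. complex_of_real (\<bar>lam i\<bar> * (cmod (\<Sum>a<d. cnj (f a) * u i a))^2))"
    proof (intro sum.cong refl)
      fix i
      have "(\<Sum>b<d. cnj (u i b) * f b) = cnj (\<Sum>a<d. cnj (f a) * u i a)" by (simp add: mult.commute)
      thus "complex_of_real \<bar>lam i\<bar> * (\<Sum>a<d. cnj (f a) * u i a) * (\<Sum>b<d. cnj (u i b) * f b) =
        complex_of_real (\<bar>lam i\<bar> * (cmod (\<Sum>a<d. cnj (f a) * u i a))^2)"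
        using complex_norm_square[of "\<Sum>a<d. cnj (f a) * u i a"] by (simp add: mult.assoc)
    qed
    finally have "Re (qf d (ent B) f) = (\<Sum>i<d. \<bar>lam i\<bar> * (cmod (\<Sum>a<d. cnj (f a) * u i a))^2)"
      by (simp add: Re_sum)
    thus "0 \<le> Re (qf d (ent B) f)" by (simp add: sum_nonneg)
  qed
  have "B * B = E * E"
  proof (rule eq_matI)
    fix a b assume "a < dim_row (E * E)" "b < dim_col (E * E)"
    hence ab: "a < d" "b < d" using Ec by auto
    have "(B * B) $$ (a,b) = (\<Sum>c<d. B $$ (a,c) * B $$ (c,b))"
      using ab Bc by (simp add: scalar_prod_def row_def col_def lessThan_atLeast0)
    also have "\<dots> = (\<Sum>c<d. (\<Sum>i<d. complex_of_real \<bar>lam i\<bar> * u i a * cnj (u i c)) * (\<Sum>j<d. complex_of_real \<bar>lam j\<bar> * u j c * cnj (u j b)))"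
      using ab by (simp add: Be)
    also have "\<dots> = (\<Sum>i<d. complex_of_real \<bar>lam i\<bar> * complex_of_real \<bar>lam i\<bar> * u i a * cnj (u i b))"
      by (rule sq_lemma[OF orth])
    also have "\<dots> = (\<Sum>i<d. complex_of_real (lam i) * complex_of_real (lam i) * u i a * cnj (u i b))"
      by (intro sum.cong refl) (metis abs_mult_self_eq of_real_mult)
    also have "\<dots> = (\<Sum>c<d. (\<Sum>i<d. complex_of_real (lam i) * u i a * cnj (u i c)) * (\<Sum>j<d. complex_of_real (lam j) * u j c * cnj (u j b)))"
      by (rule sq_lemma[OF orth, symmetric])
    also have "\<dots> = (\<Sum>c<d. E $$ (a,c) * E $$ (c,b))"
      using ab dec by simp
    also have "\<dots> = (E * E) $$ (a,b)"
      using ab Ec by (simp add: scalar_prod_def row_def col_def lessThan_atLeast0)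
    finally show "(B * B) $$ (a,b) = (E * E) $$ (a,b)" .
  qed (use Bc Ec in auto)
  thus ?thesis using pB by blast
qed



lemma mult_entry:
  assumes "A \<in> carrier_mat d d" "B \<in> carrier_mat d d" "a < d" "b < d"
  shows "(A * B) $$ (a,b) = (\<Sum>c<d. A $$ (a,c) * B $$ (c,b))"
  using assms by (simp add: scalar_prod_def row_def col_def lessThan_atLeast0)

lemma sqrt_unique:
  assumes pB: "psd d B" and pC: "psd d C" and eq: "B * B = C * C"
  shows "B = C"
proof -
  have Bc: "B \<in> carrier_mat d d" and Cc: "C \<in> carrier_mat d d" using pB pC by (auto dest: psd_carrier)
  have hB: "\<forall>a<d. \<forall>b<d. B $$ (b,a) = cnj (B $$ (a,b))" and hC: "\<forall>a<d. \<forall>b<d. C $$ (b,a) = cnj (C $$ (a,b))"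
    using pB pC unfolding psd_def hermitian_iff by blast+
  have posB: "\<forall>f. 0 \<le> Re (qf d (ent B) f)" and posC: "\<forall>f. 0 \<le> Re (qf d (ent C) f)"
    using psd_form[OF pB] psd_form[OF pC] by blast+
  have hBe: "\<forall>a<d. \<forall>b<d. ent B b a = cnj (ent B a b)" using hB unfolding ent_def .
  have hCe: "\<forall>a<d. \<forall>b<d. ent C b a = cnj (ent C a b)" using hC unfolding ent_def .
  define e where "e a c = B $$ (a,c) - C $$ (a,c)" for a c
  define s where "s a c = B $$ (a,c) + C $$ (a,c)" for a c
  have he: "e b a = cnj (e a b)" if "a < d" "b < d" for a b
  proof -
    have "B $$ (b,a) = cnj (B $$ (a,b))" "C $$ (b,a) = cnj (C $$ (a,b))" using hB hC that by blast+
    thus ?thesis unfolding e_def by simp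
  qed
  have BB: "(\<Sum>k<d. B $$ (i,k) * B $$ (k,j)) = (\<Sum>k<d. C $$ (i,k) * C $$ (k,j))" if "i < d" "j < d" for i j
    using arg_cong[OF eq, of "\<lambda>M. M $$ (i,j)"] mult_entry[OF Bc Bc that] mult_entry[OF Cc Cc that] by simp
  have SE: "(\<Sum>l<d. s k l * e l i) = - (\<Sum>l<d. e k l * s l i)" if "k < d" "i < d" for k i
  proof -
    have "(\<Sum>l<d. s k l * e l i) + (\<Sum>l<d. e k l * s l i) = (\<Sum>l<d. s k l * e l i + e k l * s l i)"
      by (simp add: sum.distrib)
    also have "\<dots> = (\<Sum>l<d. 2 * (B $$ (k,l) * B $$ (l,i)) - 2 * (C $$ (k,l) * C $$ (l,i)))"
      unfolding s_def e_def by (intro sum.cong refl) (simp add: algebra_simps)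
    also have "\<dots> = 2 * (\<Sum>l<d. B $$ (k,l) * B $$ (l,i)) - 2 * (\<Sum>l<d. C $$ (k,l) * C $$ (l,i))"
      by (simp add: sum_subtractf sum_distrib_left)
    also have "\<dots> = 0" using BB[OF that] by simp
    finally show ?thesis by (simp add: eq_neg_iff_add_eq_0)
  qed
  define T where "T = (\<Sum>i<d. \<Sum>k<d. \<Sum>l<d. e i k * s k l * e l i)"
  have "T = (\<Sum>i<d. \<Sum>k<d. \<Sum>l<d. e k l * s l i * e i k)"
    unfolding T_def by (rule triple_swap)
  also have "\<dots> = (\<Sum>i<d. \<Sum>k<d. e i k * (\<Sum>l<d. e k l * s l i))"
    by (simp add: sum_distrib_left ac_simps)
  also have "\<dots> = (\<Sum>i<d. \<Sum>k<d. e i k * (- (\<Sum>l<d. s k l * e l i)))"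
    by (intro sum.cong refl) (simp add: SE)
  also have "\<dots> = - T" unfolding T_def by (simp add: sum_distrib_left ac_simps sum_negf)
  finally have T0: "T = 0" by simp
  define TB where "TB i = qf d (ent B) (\<lambda>k. e k i)" for i
  define TC where "TC i = qf d (ent C) (\<lambda>k. e k i)" for i
  have "T = (\<Sum>i<d. TB i + TC i)"
    unfolding T_def TB_def TC_def qf_def ent_def
  proof (intro sum.cong refl)
    fix i assume i: "i \<in> {..<d}"
    have "(\<Sum>k<d. \<Sum>l<d. e i k * s k l * e l i) = (\<Sum>k<d. \<Sum>l<d. cnj (e k i) * B $$ (k,l) * e l i + cnj (e k i) * C $$ (k,l) * e l i)"
    proof (intro sum.cong refl)
      fix k l assume "k \<in> {..<d}"
      hence "e i k = cnj (e k i)" using he[of k i] i by simp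
      thus "e i k * s k l * e l i = cnj (e k i) * B $$ (k,l) * e l i + cnj (e k i) * C $$ (k,l) * e l i"
        unfolding s_def by (simp add: algebra_simps)
    qed
    thus "(\<Sum>k<d. \<Sum>l<d. e i k * s k l * e l i) = (\<Sum>k<d. \<Sum>l<d. cnj (e k i) * B $$ (k,l) * e l i) + (\<Sum>k<d. \<Sum>l<d. cnj (e k i) * C $$ (k,l) * e l i)"
      by (simp add: sum.distrib)
  qed
  hence "Re T = (\<Sum>i<d. Re (TB i) + Re (TC i))" by (simp add: Re_sum)
  hence "(\<Sum>i<d. Re (TB i) + Re (TC i)) = 0" using T0 by simp
  moreover have "\<forall>i\<in>{..<d}. 0 \<le> Re (TB i) + Re (TC i)" using posB posC unfolding TB_def TC_def
    by (simp add: add_nonneg_nonneg)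
  ultimately have z: "\<forall>i\<in>{..<d}. Re (TB i) + Re (TC i) = 0" by (metis (mono_tags) finite_lessThan sum_nonneg_eq_0_iff)
  have zBC: "Re (TB i) = 0 \<and> Re (TC i) = 0" if "i < d" for i
  proof -
    have "Re (TB i) + Re (TC i) = 0" using z that by simp
    moreover have "0 \<le> Re (TB i)" "0 \<le> Re (TC i)" unfolding TB_def TC_def using posB posC by blast+
    ultimately show ?thesis by linarith
  qed
  have zB: "Re (TB i) = 0" and zC: "Re (TC i) = 0" if "i < d" for i using zBC[OF that] by auto
  have eB: "(\<Sum>l<d. B $$ (k,l) * e l i) = 0" and eC: "(\<Sum>l<d. C $$ (k,l) * e l i) = 0" if "k < d" "i < d" for k i
  proof -
    from Q0[OF hBe posB zB[OF that(2), unfolded TB_def]] that show "(\<Sum>l<d. B $$ (k,l) * e l i) = 0"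
      unfolding ent_def by blast
    from Q0[OF hCe posC zC[OF that(2), unfolded TC_def]] that show "(\<Sum>l<d. C $$ (k,l) * e l i) = 0"
      unfolding ent_def by blast
  qed
  have ee: "(\<Sum>l<d. e k l * e l i) = 0" if "k < d" "i < d" for k i
  proof -
    have "(\<Sum>l<d. e k l * e l i) = (\<Sum>l<d. B $$ (k,l) * e l i) - (\<Sum>l<d. C $$ (k,l) * e l i)"
      unfolding e_def[of k] by (simp add: algebra_simps sum_subtractf)
    thus ?thesis using eB[OF that] eC[OF that] by simp
  qed
  have "e i l = 0" if il: "i < d" "l < d" for i l
  proof -
    have "(\<Sum>l<d. e i l * e l i) = (\<Sum>l<d. complex_of_real ((cmod (e i l))^2))"
    proof (intro sum.cong refl)
      fix l assume "l \<in> {..<d}"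
      hence "e l i = cnj (e i l)" using he[of i l] il by simp
      thus "e i l * e l i = complex_of_real ((cmod (e i l))^2)" using complex_norm_square[of "e i l"] by simp
    qed
    hence "complex_of_real (\<Sum>l<d. (cmod (e i l))^2) = 0" using ee[OF il(1) il(1)] by (simp only: of_real_sum)
    hence "(\<Sum>l<d. (cmod (e i l))^2) = 0" by (simp only: of_real_eq_0_iff)
    hence "\<forall>l\<in>{..<d}. (cmod (e i l))^2 = 0" by (simp add: sum_nonneg_eq_0_iff)
    thus ?thesis using il by simp
  qed
  thus "B = C" using Bc Cc unfolding e_def by (intro eq_matI) auto
qed



lemma mtrace_lin:
  assumes "A \<in> carrier_mat d d" "B \<in> carrier_mat d d"
  shows "mtrace (a \<cdot>\<^sub>m A + b \<cdot>\<^sub>m B) = a * mtrace A + b * mtrace B"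
  using assms unfolding mtrace_def by (simp add: sum.distrib sum_distrib_left)

lemma msqrt_eq:
  assumes "psd d B" "B * B = X"
  shows "msqrt d X = B"
  unfolding msqrt_def
proof (rule the_equality)
  show "psd d B \<and> B * B = X" using assms by simp
  fix C assume "psd d C \<and> C * C = X"
  thus "C = B" using sqrt_unique[of d C B] assms by simp
qed

lemma psd_scale:
  assumes p: "psd d B" and r: "r \<ge> 0"
  shows "psd d (complex_of_real r \<cdot>\<^sub>m B)"
proof -
  have Bc: "B \<in> carrier_mat d d" and hB: "\<forall>a<d. \<forall>b<d. B $$ (b,a) = cnj (B $$ (a,b))"
    using p unfolding psd_def hermitian_iff by blast+
  have h: "hermitian d (complex_of_real r \<cdot>\<^sub>m B)" unfolding hermitian_iff
  proof (intro conjI allI impI)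
    show "complex_of_real r \<cdot>\<^sub>m B \<in> carrier_mat d d" using Bc by simp
    fix a b assume ab: "a < d" "b < d"
    have "B $$ (b,a) = cnj (B $$ (a,b))" using hB ab by blast
    thus "(complex_of_real r \<cdot>\<^sub>m B) $$ (b,a) = cnj ((complex_of_real r \<cdot>\<^sub>m B) $$ (a,b))"
      using ab Bc by simp
  qed
  have "qf d (ent (complex_of_real r \<cdot>\<^sub>m B)) f = complex_of_real r * qf d (ent B) f" for f
    unfolding qf_def ent_def using Bc
    by (simp add: sum_distrib_left ac_simps)
  hence "0 \<le> Re (qf d (ent (complex_of_real r \<cdot>\<^sub>m B)) f)" for f
    using psd_form[OF p, of f] r by simp
  thus ?thesis unfolding psd_iff using h by blast
qed

lemma trace_zero_psd:
  assumes p: "psd d B" and z: "Re (mtrace B) = 0"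
  shows "\<forall>a<d. \<forall>i<d. B $$ (a,i) = 0"
proof -
  have Bc: "B \<in> carrier_mat d d" and hB: "\<forall>a<d. \<forall>b<d. ent B b a = cnj (ent B a b)"
    using p unfolding psd_def hermitian_iff ent_def by blast+
  have pos: "\<forall>f. 0 \<le> Re (qf d (ent B) f)" using psd_form[OF p] by blast
  define dl where "dl (i::nat) (k::nat) = (if k = i then (1::complex) else 0)" for i k
  have qd: "qf d (ent B) (dl i) = B $$ (i,i)" if "i < d" for i
  proof -
    have e: "cnj (dl i a) * ent B a b * dl i b = (if a = i then (if b = i then B $$ (a,b) else 0) else 0)" for a b
      unfolding dl_def ent_def by simp
    show ?thesis unfolding qf_def e using that by (simp add: sum.If_cases)
  qed
  have "Re (mtrace B) = (\<Sum>i<d. Re (qf d (ent B) (dl i)))"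
    unfolding mtrace_def using Bc qd by (simp add: Re_sum)
  hence "(\<Sum>i<d. Re (qf d (ent B) (dl i))) = 0" using z by simp
  hence "\<forall>i\<in>{..<d}. Re (qf d (ent B) (dl i)) = 0"
    using pos by (metis (mono_tags) finite_lessThan sum_nonneg_eq_0_iff)
  show ?thesis
  proof (intro allI impI)
    fix a i assume a: "a < d" and i: "i < d"
    have "Re (qf d (ent B) (dl i)) = 0" using \<open>\<forall>i\<in>{..<d}. _\<close> i by simp
    from Q0[OF hB pos this] a have "(\<Sum>b<d. ent B a b * dl i b) = 0" by blast
    moreover have "ent B a b * dl i b = (if b = i then B $$ (a,b) else 0)" for b
      unfolding dl_def ent_def by simp
    ultimately show "B $$ (a,i) = 0" using i by (simp add: sum.delta)
  qed
qed

lemma trace_psd_ge0: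
  assumes p: "psd d B"
  shows "0 \<le> Re (mtrace B)"
proof -
  have Bc: "B \<in> carrier_mat d d" using p by (rule psd_carrier)
  define dl where "dl (i::nat) (k::nat) = (if k = i then (1::complex) else 0)" for i k
  have qd: "qf d (ent B) (dl i) = B $$ (i,i)" if "i < d" for i
  proof -
    have e: "cnj (dl i a) * ent B a b * dl i b = (if a = i then (if b = i then B $$ (a,b) else 0) else 0)" for a b
      unfolding dl_def ent_def by simp
    show ?thesis unfolding qf_def e using that by (simp add: sum.If_cases)
  qed
  have "Re (mtrace B) = (\<Sum>i<d. Re (qf d (ent B) (dl i)))"
    unfolding mtrace_def using Bc qd by (simp add: Re_sum)
  thus ?thesis using psd_form[OF p] by (simp add: sum_nonneg)
qed



theorem proposition3:
  fixes d N :: nat and \<rho> \<sigma> M :: "nat \<Rightarrow> complex mat" and K :: "complex mat"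
    and r :: "nat \<Rightarrow> real"
  assumes "N > 0"
    and "\<forall>x<N. density d (\<rho> x)"
    and "hermitian d K"
    and "\<forall>x<N. r x \<ge> 0"
    and "\<forall>x<N. density d (\<sigma> x)"
    and "povm d N M"
    and "\<forall>x<N. K = complex_of_real (1 / real N) \<cdot>\<^sub>m \<rho> x + complex_of_real (r x) \<cdot>\<^sub>m \<sigma> x"
    and "\<forall>x<N. complex_of_real (r x) * mtrace (M x * \<sigma> x) = 0"
  shows "\<exists>r0. (\<forall>x<N. r x = r0) \<and> P_guess d N \<rho> = 1 / real N + r0 \<and>
    (\<forall>x<N. \<forall>y<N. \<sigma> x \<noteq> \<sigma> y \<longrightarrow>
       r0 = trace_norm d (complex_of_real (1 / real N) \<cdot>\<^sub>m \<rho> x - complex_of_real (1 / real N) \<cdot>\<^sub>m \<rho> y)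
            / trace_norm d (\<sigma> x - \<sigma> y))"
proof -
  note Npos = assms(1) and hrho = assms(2) and hK = assms(3) and hr = assms(4) and hsig = assms(5)
    and hM = assms(6) and hKeq = assms(7) and hz = assms(8)
  define c where "c = complex_of_real (1 / real N)"
  have rhoc: "\<rho> x \<in> carrier_mat d d" if "x < N" for x
    using hrho that unfolding density_def by (auto dest: psd_carrier)
  have sigc: "\<sigma> x \<in> carrier_mat d d" if "x < N" for x
    using hsig that unfolding density_def by (auto dest: psd_carrier)
  have psig: "psd d (\<sigma> x)" if "x < N" for x using hsig that unfolding density_def by blast
  have Kc: "K \<in> carrier_mat d d" using hK unfolding hermitian_def by blast
  define r0 where "r0 = Re (mtrace K) - 1 / real N"
  have req: "r x = r0" if x: "x < N" for x
  proof -
    have "mtrace K = c * mtrace (\<rho> x) + complex_of_real (r x) * mtrace (\<sigma> x)"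
      using hKeq x mtrace_lin[OF rhoc[OF x] sigc[OF x]] unfolding c_def by metis
    also have "\<dots> = c + complex_of_real (r x)"
      using hrho hsig x unfolding density_def by simp
    finally show ?thesis unfolding r0_def c_def by simp
  qed
  have r0pos: "r0 \<ge> 0" using req[OF Npos] hr Npos by force
  have Kent: "c * \<rho> x $$ (a,b) = K $$ (a,b) - complex_of_real r0 * \<sigma> x $$ (a,b)"
    if x: "x < N" and ab: "a < d" "b < d" for x a b
  proof -
    have "K $$ (a,b) = (c \<cdot>\<^sub>m \<rho> x + complex_of_real (r x) \<cdot>\<^sub>m \<sigma> x) $$ (a,b)"
      using hKeq x unfolding c_def by metis
    also have "\<dots> = c * \<rho> x $$ (a,b) + complex_of_real r0 * \<sigma> x $$ (a,b)"
      using rhoc[OF x] sigc[OF x] ab req[OF x] by simp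
    finally show ?thesis by simp
  qed
  define val where "val E = (\<Sum>x<N. Re (mtrace (E x * \<rho> x)) / real N)" for E
  have valeq: "val E = Re (mtrace K) - r0 * (\<Sum>x<N. Re (mtrace (E x * \<sigma> x)))" if pE: "povm d N E" for E
  proof -
    have Ec: "E x \<in> carrier_mat d d" if "x < N" for x
      using pE that unfolding povm_def by (auto dest: psd_carrier)
    have ms: "(\<Sum>x<N. E x $$ (a,b)) = (if a = b then 1 else 0)" if "a < d" "b < d" for a b
    proof -
      have "msum d E {..<N} $$ (a,b) = 1\<^sub>m d $$ (a,b)" using pE unfolding povm_def by simp
      thus ?thesis unfolding msum_def using that by simp
    qed
    have step: "c * mtrace (E x * \<rho> x) = (\<Sum>a<d. \<Sum>b<d. E x $$ (a,b) * K $$ (b,a))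
        - complex_of_real r0 * mtrace (E x * \<sigma> x)" if x: "x < N" for x
    proof -
      have "c * mtrace (E x * \<rho> x) = (\<Sum>a<d. \<Sum>b<d. E x $$ (a,b) * (c * \<rho> x $$ (b,a)))"
        unfolding mtrace_mult[OF Ec[OF x] rhoc[OF x]] by (simp add: sum_distrib_left ac_simps)
      also have "\<dots> = (\<Sum>a<d. \<Sum>b<d. E x $$ (a,b) * K $$ (b,a) - complex_of_real r0 * (E x $$ (a,b) * \<sigma> x $$ (b,a)))"
        by (intro sum.cong refl) (simp add: Kent[OF x] algebra_simps)
      also have "\<dots> = (\<Sum>a<d. \<Sum>b<d. E x $$ (a,b) * K $$ (b,a)) - complex_of_real r0 * mtrace (E x * \<sigma> x)"
        unfolding mtrace_mult[OF Ec[OF x] sigc[OF x]] by (simp add: sum_subtractf sum_distrib_left)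
      finally show ?thesis .
    qed
    have sumK: "(\<Sum>x<N. \<Sum>a<d. \<Sum>b<d. E x $$ (a,b) * K $$ (b,a)) = mtrace K"
    proof -
      have "(\<Sum>x<N. \<Sum>a<d. \<Sum>b<d. E x $$ (a,b) * K $$ (b,a)) = (\<Sum>a<d. \<Sum>b<d. \<Sum>x<N. E x $$ (a,b) * K $$ (b,a))"
        by (rule triple_swap[symmetric])
      also have "\<dots> = (\<Sum>a<d. \<Sum>b<d. (if a = b then 1 else 0) * K $$ (b,a))"
        by (intro sum.cong refl) (simp add: ms flip: sum_distrib_right)
      also have "\<dots> = (\<Sum>a<d. K $$ (a,a))"
      proof (intro sum.cong refl)
        fix a assume a: "a \<in> {..<d}"
        have "(if a = b then 1 else 0) * K $$ (b,a) = (if b = a then K $$ (a,a) else 0)" for b by auto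
        thus "(\<Sum>b<d. (if a = b then 1 else 0) * K $$ (b,a)) = K $$ (a,a)" using a by (simp add: sum.If_cases)
      qed
      also have "\<dots> = mtrace K" unfolding mtrace_def using Kc by simp
      finally show ?thesis .
    qed
    have "(\<Sum>x<N. c * mtrace (E x * \<rho> x)) = mtrace K - complex_of_real r0 * (\<Sum>x<N. mtrace (E x * \<sigma> x))"
      using step sumK by (simp add: sum_subtractf sum_distrib_left)
    hence "Re (\<Sum>x<N. c * mtrace (E x * \<rho> x)) = Re (mtrace K) - r0 * (\<Sum>x<N. Re (mtrace (E x * \<sigma> x)))"
      by (simp add: Re_sum)
    moreover have "Re (\<Sum>x<N. c * mtrace (E x * \<rho> x)) = val E"
      unfolding val_def c_def by (simp add: Re_sum)
    ultimately show ?thesis by simp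
  qed
  have upper: "val E \<le> 1 / real N + r0" if pE: "povm d N E" for E
  proof -
    have "0 \<le> (\<Sum>x<N. Re (mtrace (E x * \<sigma> x)))"
    proof (rule sum_nonneg)
      fix x assume "x \<in> {..<N}"
      hence x: "x < N" by simp
      have "psd d (E x)" using pE x unfolding povm_def by blast
      thus "0 \<le> Re (mtrace (E x * \<sigma> x))" using trace_nonneg psig[OF x] by blast
    qed
    thus ?thesis using valeq[OF pE] r0pos unfolding r0_def by (simp add: mult_nonneg_nonneg)
  qed
  have attain: "val M = 1 / real N + r0"
  proof -
    have "(\<Sum>x<N. Re (mtrace (M x * \<sigma> x))) * r0 = (\<Sum>x<N. Re (complex_of_real (r x) * mtrace (M x * \<sigma> x)))"
    proof -
      have "(\<Sum>x<N. Re (mtrace (M x * \<sigma> x))) * r0 = (\<Sum>x<N. r0 * Re (mtrace (M x * \<sigma> x)))"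
        by (simp add: sum_distrib_left mult.commute)
      also have "\<dots> = (\<Sum>x<N. Re (complex_of_real (r x) * mtrace (M x * \<sigma> x)))"
        by (intro sum.cong refl) (simp add: req)
      finally show ?thesis .
    qed
    also have "\<dots> = 0" using hz by (intro sum.neutral) auto
    finally show ?thesis using valeq[OF hM] unfolding r0_def by (simp add: mult.commute)
  qed
  have PG: "P_guess d N \<rho> = 1 / real N + r0"
    unfolding P_guess_def
  proof (rule cSup_eq_maximum)
    show "1 / real N + r0 \<in> {\<Sum>x<N. Re (mtrace (Ma x * \<rho> x)) / real N |Ma. povm d N Ma}"
    proof -
      have "\<exists>Ma. 1 / real N + r0 = (\<Sum>x<N. Re (mtrace (Ma x * \<rho> x)) / real N) \<and> povm d N Ma"
        using attain hM unfolding val_def by (intro exI[of _ M]) simp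
      thus ?thesis by simp
    qed
    fix z assume "z \<in> {\<Sum>x<N. Re (mtrace (Ma x * \<rho> x)) / real N |Ma. povm d N Ma}"
    then obtain E where "povm d N E" "z = val E" unfolding val_def by blast
    thus "z \<le> 1 / real N + r0" using upper by simp
  qed
  have TN: "r0 = trace_norm d (c \<cdot>\<^sub>m \<rho> x - c \<cdot>\<^sub>m \<rho> y) / trace_norm d (\<sigma> x - \<sigma> y)"
    if x: "x < N" and y: "y < N" and ne: "\<sigma> x \<noteq> \<sigma> y" for x y
  proof -
    have hx: "\<forall>a<d. \<forall>b<d. \<sigma> x $$ (b,a) = cnj (\<sigma> x $$ (a,b))"
      using psig[OF x] unfolding psd_def hermitian_iff by blast
    have hy: "\<forall>a<d. \<forall>b<d. \<sigma> y $$ (b,a) = cnj (\<sigma> y $$ (a,b))"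
      using psig[OF y] unfolding psd_def hermitian_iff by blast
    define E where "E = \<sigma> x - \<sigma> y"
    have Ec: "E \<in> carrier_mat d d" unfolding E_def using sigc[OF x] sigc[OF y] by (simp add: minus_carrier_mat)
    have Ee: "E $$ (a,b) = \<sigma> x $$ (a,b) - \<sigma> y $$ (a,b)" if "a < d" "b < d" for a b
      unfolding E_def using that sigc[OF x] sigc[OF y] by simp
    have hEe: "E $$ (b,a) = cnj (E $$ (a,b))" if ab: "a < d" "b < d" for a b
    proof -
      have "\<sigma> x $$ (b,a) = cnj (\<sigma> x $$ (a,b))" "\<sigma> y $$ (b,a) = cnj (\<sigma> y $$ (a,b))"
        using hx hy ab by blast+
      thus ?thesis using Ee[OF ab] Ee[OF ab(2) ab(1)] by simp
    qed
    have hE: "hermitian d E" unfolding hermitian_iff using Ec hEe by blast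
    define D where "D = c \<cdot>\<^sub>m \<rho> x - c \<cdot>\<^sub>m \<rho> y"
    have Dc: "D \<in> carrier_mat d d" unfolding D_def using rhoc[OF x] rhoc[OF y] by (simp add: minus_carrier_mat)
    have De: "D $$ (a,b) = - complex_of_real r0 * E $$ (a,b)" if ab: "a < d" "b < d" for a b
    proof -
      have "D $$ (a,b) = c * \<rho> x $$ (a,b) - c * \<rho> y $$ (a,b)"
        unfolding D_def using ab rhoc[OF x] rhoc[OF y] by simp
      also have "\<dots> = - complex_of_real r0 * E $$ (a,b)"
        unfolding Kent[OF x ab] Kent[OF y ab] Ee[OF ab] by (simp add: algebra_simps)
      finally show ?thesis .
    qed
    have adjDc: "adj D \<in> carrier_mat d d" using Dc by (intro carrier_matI) (simp_all add: adj_dim)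
    have adjD: "adj D * D = complex_of_real (r0^2) \<cdot>\<^sub>m (E * E)"
    proof (rule eq_matI)
      fix a b assume "a < dim_row (complex_of_real (r0^2) \<cdot>\<^sub>m (E * E))" "b < dim_col (complex_of_real (r0^2) \<cdot>\<^sub>m (E * E))"
      hence ab: "a < d" "b < d" using Ec by auto
      have "(adj D * D) $$ (a,b) = (\<Sum>k<d. adj D $$ (a,k) * D $$ (k,b))" by (rule mult_entry[OF adjDc Dc ab])
      also have "\<dots> = (\<Sum>k<d. complex_of_real (r0^2) * (E $$ (a,k) * E $$ (k,b)))"
      proof (intro sum.cong refl)
        fix k assume "k \<in> {..<d}"
        hence k: "k < d" by simp
        have "adj D $$ (a,k) = cnj (D $$ (k,a))" using adj_index[of a D k] Dc ab k by simp
        also have "\<dots> = - complex_of_real r0 * E $$ (a,k)" using De[OF k ab(1)] hEe[OF k ab(1)] by simp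
        finally show "adj D $$ (a,k) * D $$ (k,b) = complex_of_real (r0^2) * (E $$ (a,k) * E $$ (k,b))"
          using De[OF k ab(2)] by (simp add: power2_eq_square algebra_simps)
      qed
      also have "\<dots> = (complex_of_real (r0^2) \<cdot>\<^sub>m (E * E)) $$ (a,b)"
        using ab Ec by (simp add: mult_entry[OF Ec Ec ab] sum_distrib_left)
      finally show "(adj D * D) $$ (a,b) = (complex_of_real (r0^2) \<cdot>\<^sub>m (E * E)) $$ (a,b)" .
    qed (use adjDc Dc Ec in auto)
    have adjE: "adj E * E = E * E" using hE unfolding hermitian_def by simp
    obtain B0 where pB0: "psd d B0" and B0sq: "B0 * B0 = E * E" using sqrt_exists[OF hE] by blast
    have B0c: "B0 \<in> carrier_mat d d" using pB0 by (rule psd_carrier)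
    have ms1: "msqrt d (E * E) = B0" by (rule msqrt_eq[OF pB0 B0sq])
    have sq2: "(complex_of_real r0 \<cdot>\<^sub>m B0) * (complex_of_real r0 \<cdot>\<^sub>m B0) = complex_of_real (r0^2) \<cdot>\<^sub>m (E * E)"
    proof (rule eq_matI)
      fix a b assume "a < dim_row (complex_of_real (r0^2) \<cdot>\<^sub>m (E * E))" "b < dim_col (complex_of_real (r0^2) \<cdot>\<^sub>m (E * E))"
      hence ab: "a < d" "b < d" using Ec by auto
      have sc: "complex_of_real r0 \<cdot>\<^sub>m B0 \<in> carrier_mat d d" using B0c by simp
      have "((complex_of_real r0 \<cdot>\<^sub>m B0) * (complex_of_real r0 \<cdot>\<^sub>m B0)) $$ (a,b)
          = complex_of_real (r0^2) * (B0 * B0) $$ (a,b)"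
        unfolding mult_entry[OF sc sc ab] mult_entry[OF B0c B0c ab] using ab B0c
        by (simp add: sum_distrib_left power2_eq_square algebra_simps)
      thus "((complex_of_real r0 \<cdot>\<^sub>m B0) * (complex_of_real r0 \<cdot>\<^sub>m B0)) $$ (a,b) = (complex_of_real (r0^2) \<cdot>\<^sub>m (E * E)) $$ (a,b)"
        using B0sq ab Ec by simp
    qed (use B0c Ec in auto)
    have ms2: "msqrt d (complex_of_real (r0^2) \<cdot>\<^sub>m (E * E)) = complex_of_real r0 \<cdot>\<^sub>m B0"
      by (rule msqrt_eq[OF psd_scale[OF pB0 r0pos] sq2])
    define t where "t = Re (mtrace B0)"
    have tnD: "trace_norm d D = r0 * t"
    proof -
      have "mtrace (complex_of_real r0 \<cdot>\<^sub>m B0) = complex_of_real r0 * mtrace B0"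
        unfolding mtrace_def using B0c by (simp add: sum_distrib_left)
      thus ?thesis unfolding trace_norm_def adjD ms2 t_def by simp
    qed
    have tnE: "trace_norm d (\<sigma> x - \<sigma> y) = t"
      unfolding trace_norm_def E_def[symmetric] adjE ms1 t_def ..
    have t0: "t \<ge> 0" unfolding t_def by (rule trace_psd_ge0[OF pB0])
    have "t \<noteq> 0"
    proof
      assume "t = 0"
      hence B0z: "\<forall>a<d. \<forall>i<d. B0 $$ (a,i) = 0" using trace_zero_psd[OF pB0] unfolding t_def by blast
      have "E $$ (a,b) = 0" if ab: "a < d" "b < d" for a b
      proof -
        have "(E * E) $$ (a,a) = (B0 * B0) $$ (a,a)" using B0sq by simp
        also have "\<dots> = 0" unfolding mult_entry[OF B0c B0c ab(1) ab(1)] using B0z ab by simp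
        finally have z: "(\<Sum>k<d. E $$ (a,k) * E $$ (k,a)) = 0" using mult_entry[OF Ec Ec ab(1) ab(1)] by simp
        have "(\<Sum>k<d. E $$ (a,k) * E $$ (k,a)) = (\<Sum>k<d. complex_of_real ((cmod (E $$ (a,k)))^2))"
        proof (intro sum.cong refl)
          fix k assume "k \<in> {..<d}"
          hence "E $$ (k,a) = cnj (E $$ (a,k))" using hEe[of a k] ab by simp
          thus "E $$ (a,k) * E $$ (k,a) = complex_of_real ((cmod (E $$ (a,k)))^2)"
            using complex_norm_square[of "E $$ (a,k)"] by simp
        qed
        hence "complex_of_real (\<Sum>k<d. (cmod (E $$ (a,k)))^2) = 0" using z by (simp only: of_real_sum)
        hence "(\<Sum>k<d. (cmod (E $$ (a,k)))^2) = 0" by (simp only: of_real_eq_0_iff)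
        hence "\<forall>k\<in>{..<d}. (cmod (E $$ (a,k)))^2 = 0"
          by (metis (mono_tags) finite_lessThan sum_nonneg_eq_0_iff zero_le_power2)
        thus ?thesis using ab by simp
      qed
      hence "\<sigma> x = \<sigma> y" using sigc[OF x] sigc[OF y] Ee by (intro eq_matI) auto
      thus False using ne by simp
    qed
    hence tp: "t > 0" using t0 by simp
    show ?thesis unfolding D_def[symmetric] tnD tnE using tp by simp
  qed
  show ?thesis using req PG TN unfolding c_def by blast
qed

end
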